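(* Let $G$ be a graph with $\mathrm{pw}(G)=3$, and let $C^1,\ldots,C^c$ be pairwise vertex-disjoint chunk graphs, each a union of connected components of $G$, with $G=C^1\cup\cdots\cup C^c$. For each $i$ let $\mathcal{Q}_i$ be a path decomposition of $C^i$ of width at most $3$, and let $a$ and $b$ be the numbers of path decompositions among $\mathcal{Q}_1,\ldots,\mathcal{Q}_c$ of Type A and of Type B, respectively. Then $$\min_{\pi,\ \mathbf{f}\in\{0,1\}^c}\mathrm{length}\bigl(\mathcal{Q}^{f_1}_{\pi(1)}\oplus\cdots\oplus\mathcal{Q}^{f_c}_{\pi(c)}\bigr)=\sum_{i=1}^c\mathrm{length}(\mathcal{Q}_i)-\mu(a,b),$$ where the minimum is over all permutations $\pi$ of $\{1,\ldots,c\}$ and vectors $\mathbf{f}=(f_1,\ldots,f_c)\in\{0,1\}^c$, $\mathcal{Q}_i^0=\mathcal{Q}_i$, $\mathcal{Q}_i^1$ is the reverse of $\mathcal{Q}_i$, and $\mu(a,b)=\max(0,a-1)$ if $b=0$ and $\mu(a,b)=a+\lfloor b/2\rfloor$ if $b>0$.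
   Context: A path decomposition of $G$ is a sequence $(X_1,\ldots,X_l)$ of subsets of $V(G)$ covering $V(G)$, such that every edge lies in some $X_i$, and $X_i\cap X_k\subseteq X_j$ whenever $i\leq j\leq k$; width is $\max_i|X_i|-1$, length is $l$; $\mathrm{pw}(G)$ is the minimum width. A component is big if it has at least $3$ vertices; a chunk graph has exactly one big component. A path decomposition $(X_1,\ldots,X_l)$ of a chunk graph is of Type A if $|X_1|\leq 2$ and $|X_l|\leq 2$; Type B if exactly one of $|X_1|\leq 2$, $|X_l|\leq 2$ holds; (Type C if $|X_1|>2$ and $|X_l|>2$). The reverse of $(X_1,\ldots,X_l)$ is $(X_l,\ldots,X_1)$. For path decompositions $\mathcal{P}_1=(X^1_1,\ldots,X^1_{l_1})$, $\mathcal{P}_2=(X^2_1,\ldots,X^2_{l_2})$ of vertex-disjoint graphs, $\mathcal{P}_1\oplus\mathcal{P}_2=(X^1_1,\ldots,X^1_{l_1-1},X^1_{l_1}\cup X^2_1,X^2_2,\ldots,X^2_{l_2})$ if $|X^1_{l_1}|\leq 2$ and $|X^2_1|\leq 2$, and $(X^1_1,\ldots,X^1_{l_1},X^2_1,\ldots,X^2_{l_2})$ otherwise; multiple concatenations are evaluated left to right: $\mathcal{P}_1\oplus\cdots\oplus\mathcal{P}_c=(\cdots((\mathcal{P}_1\oplus\mathcal{P}_2)\oplus\mathcal{P}_3)\cdots)\oplus\mathcal{P}_c$. *)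

theory Defs
  imports "HOL-Combinatorics.Permutations"
begin

definition graph :: "'a set \<Rightarrow> 'a set set \<Rightarrow> bool" where
  "graph V E \<longleftrightarrow> finite V \<and> (\<forall>e\<in>E. e \<subseteq> V \<and> card e = 2)"

definition adj :: "'a set set \<Rightarrow> 'a \<Rightarrow> 'a \<Rightarrow> bool" where
  "adj E x y \<longleftrightarrow> {x, y} \<in> E"

definition reach :: "'a set \<Rightarrow> 'a set set \<Rightarrow> 'a \<Rightarrow> 'a \<Rightarrow> bool" where
  "reach V E x y \<longleftrightarrow> x \<in> V \<and> (\<lambda>u v. u \<in> V \<and> v \<in> V \<and> adj E u v)\<^sup>*\<^sup>* x y"

definition is_component :: "'a set \<Rightarrow> 'a set set \<Rightarrow> 'a set \<Rightarrow> bool" where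
  "is_component V E S \<longleftrightarrow> (\<exists>x\<in>V. S = {y. reach V E x y})"

definition big_component :: "'a set \<Rightarrow> 'a set set \<Rightarrow> 'a set \<Rightarrow> bool" where
  "big_component V E S \<longleftrightarrow> is_component V E S \<and> card S \<ge> 3"

definition chunk_graph :: "'a set \<Rightarrow> 'a set set \<Rightarrow> bool" where
  "chunk_graph V E \<longleftrightarrow> (\<exists>!S. big_component V E S)"

definition is_path_decomp :: "'a set \<Rightarrow> 'a set set \<Rightarrow> 'a set list \<Rightarrow> bool" where
  "is_path_decomp V E Xs \<longleftrightarrow>
     (\<forall>X\<in>set Xs. X \<subseteq> V) \<and> \<Union>(set Xs) = V \<and>
     (\<forall>e\<in>E. \<exists>X\<in>set Xs. e \<subseteq> X) \<and>
     (\<forall>i j k. i \<le> j \<and> j \<le> k \<and> k < length Xs \<longrightarrow> Xs ! i \<inter> Xs ! k \<subseteq> Xs ! j)"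

definition pd_width :: "'a set list \<Rightarrow> nat" where
  "pd_width Xs = Max (card ` set Xs) - 1"

definition pathwidth :: "'a set \<Rightarrow> 'a set set \<Rightarrow> nat" where
  "pathwidth V E = (LEAST w. \<exists>Xs. is_path_decomp V E Xs \<and> pd_width Xs = w)"

definition typeA :: "'a set list \<Rightarrow> bool" where
  "typeA Xs \<longleftrightarrow> card (hd Xs) \<le> 2 \<and> card (last Xs) \<le> 2"

definition typeB :: "'a set list \<Rightarrow> bool" where
  "typeB Xs \<longleftrightarrow> (card (hd Xs) \<le> 2) \<noteq> (card (last Xs) \<le> 2)"

definition oplus :: "'a set list \<Rightarrow> 'a set list \<Rightarrow> 'a set list" where
  "oplus P1 P2 = (if card (last P1) \<le> 2 \<and> card (hd P2) \<le> 2
      then butlast P1 @ [last P1 \<union> hd P2] @ tl P2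
      else P1 @ P2)"

fun concat_pds :: "'a set list list \<Rightarrow> 'a set list" where
  "concat_pds [] = []"
| "concat_pds (P # Ps) = foldl oplus P Ps"

definition orient :: "bool \<Rightarrow> 'a set list \<Rightarrow> 'a set list" where
  "orient f P = (if f then rev P else P)"

definition mu :: "nat \<Rightarrow> nat \<Rightarrow> nat" where
  "mu a b = (if b = 0 then a - 1 else a + b div 2)"

end

theory Submission
  imports Defs
begin

definition sm :: "'a set list \<Rightarrow> bool" where "sm P \<longleftrightarrow> card (hd P) \<le> 2"
definition em :: "'a set list \<Rightarrow> bool" where "em P \<longleftrightarrow> card (last P) \<le> 2"
definition good :: "'a set list \<Rightarrow> bool" where
  "good P \<longleftrightarrow> P \<noteq> [] \<and> (length P = 1 \<longrightarrow> \<not> sm P)"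

fun mc :: "bool \<Rightarrow> 'a set list list \<Rightarrow> nat" where
  "mc e [] = 0"
| "mc e (P # Ps) = (if e \<and> sm P then 1 else 0) + mc (em P) Ps"

lemma oplus_props:
  assumes "P \<noteq> []" "good Q"
  shows "oplus P Q \<noteq> [] \<and> last (oplus P Q) = last Q \<and>
         length (oplus P Q) + (if em P \<and> sm Q then 1 else 0) = length P + length Q"
proof (cases "em P \<and> sm Q")
  case True
  then have "tl Q \<noteq> []" using assms(2) unfolding good_def
    by (cases Q) auto
  moreover have "Q \<noteq> []" using assms(2) good_def by auto
  ultimately show ?thesis using True assms(1) unfolding oplus_def em_def sm_def
    by (auto simp: last_tl)
next
  case False
  then show ?thesis using assms unfolding oplus_def em_def sm_def good_def by auto
qed

lemma foldl_len:
  "P \<noteq> [] \<Longrightarrow> \<forall>Q\<in>set Ps. good Q \<Longrightarrow>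
   length (foldl oplus P Ps) + mc (em P) Ps = length P + sum_list (map length Ps)"
proof (induction Ps arbitrary: P)
  case Nil then show ?case by simp
next
  case (Cons Q Qs)
  have g: "good Q" using Cons.prems by simp
  note op = oplus_props[OF Cons.prems(1) g]
  have em: "em (oplus P Q) = em Q" using op by (simp add: em_def)
  have "length (foldl oplus (oplus P Q) Qs) + mc (em (oplus P Q)) Qs
        = length (oplus P Q) + sum_list (map length Qs)"
    using Cons.IH[of "oplus P Q"] op Cons.prems by simp
  then show ?case using op em by simp
qed

lemma concat_len:
  "\<forall>Q\<in>set Ps. good Q \<Longrightarrow> length (concat_pds Ps) + mc False Ps = sum_list (map length Ps)"
proof (cases Ps)
  case (Cons P Qs)
  assume a: "\<forall>Q\<in>set Ps. good Q"
  then have "P \<noteq> []" using Cons good_def by auto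
  then show ?thesis using foldl_len[of P Qs] a Cons by simp
qed simp

definition lastE :: "bool \<Rightarrow> 'a set list list \<Rightarrow> bool" where
  "lastE e xs = (if xs = [] then e else em (last xs))"

lemma mc_app: "mc e (xs @ ys) = mc e xs + mc (lastE e xs) ys"
  by (induction xs arbitrary: e) (auto simp: lastE_def)

lemma UB1: "2 * mc e Ps \<le> of_bool e + sum_list (map (\<lambda>P. of_bool (sm P) + of_bool (em P)) Ps)"
proof (induction Ps arbitrary: e)
  case (Cons a Ps)
  show ?case using Cons.IH[of "em a"] by (cases e; cases "sm a"; cases "em a") auto
qed simp

lemma UB0: "\<forall>P\<in>set Ps. sm P = em P \<Longrightarrow>
   mc e Ps \<le> of_bool e + sum_list (map (\<lambda>P. of_bool (sm P \<and> em P)) Ps) - 1"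
proof (induction Ps arbitrary: e)
  case Nil then show ?case by simp
next
  case (Cons P Ps)
  then have IH: "mc (em P) Ps \<le> of_bool (em P) + sum_list (map (\<lambda>P. of_bool (sm P \<and> em P)) Ps) - 1"
    by simp
  have "sm P = em P" using Cons.prems by simp
  then show ?case using IH by (cases "em P"; cases e) auto
qed

lemma sm_orient: "P \<noteq> [] \<Longrightarrow> sm (orient f P) = (if f then em P else sm P)"
  by (simp add: orient_def sm_def em_def hd_rev)
lemma em_orient: "P \<noteq> [] \<Longrightarrow> em (orient f P) = (if f then sm P else em P)"
  by (simp add: orient_def sm_def em_def last_rev)
lemma len_orient: "length (orient f P) = length P"
  by (simp add: orient_def)
lemma good_orient: "good P \<Longrightarrow> good (orient f P)"
  unfolding good_def using sm_orient[of P f]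
  by (auto simp: orient_def em_def sm_def hd_rev) (metis hd_conv_nth last_conv_nth One_nat_def diff_Suc_1 le_numeral_extra(1) less_one)+

fun alt :: "(nat \<Rightarrow> 'a set list) \<Rightarrow> bool \<Rightarrow> nat list \<Rightarrow> (nat \<times> bool) list" where
  "alt Q d [] = []"
| "alt Q d (x # xs) = (x, if d then em (Q x) else sm (Q x)) # alt Q (\<not> d) xs"

definition pcs :: "(nat \<Rightarrow> 'a set list) \<Rightarrow> (nat \<times> bool) list \<Rightarrow> 'a set list list" where
  "pcs Q arr = map (\<lambda>(i, fl). orient fl (Q i)) arr"

lemma map_fst_alt: "map fst (alt Q d xs) = xs"
  by (induction xs arbitrary: d) auto

lemma mc_alt:
  "\<forall>x\<in>set xs. Q x \<noteq> [] \<and> sm (Q x) \<noteq> em (Q x) \<Longrightarrow>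
   mc e (pcs Q (alt Q d xs)) = (if d \<and> e then (length xs + 1) div 2
       else if d then (length xs - 1) div 2 else length xs div 2)"
proof (induction xs arbitrary: e d)
  case Nil then show ?case by (simp add: pcs_def)
next
  case (Cons x xs)
  have q: "Q x \<noteq> []" "sm (Q x) \<noteq> em (Q x)" using Cons.prems by auto
  have IH: "\<And>e d. mc e (pcs Q (alt Q d xs)) = (if d \<and> e then (length xs + 1) div 2
       else if d then (length xs - 1) div 2 else length xs div 2)"
    using Cons by simp
  have s1: "sm (orient (if d then em (Q x) else sm (Q x)) (Q x)) = d"
    and e1: "em (orient (if d then em (Q x) else sm (Q x)) (Q x)) = (\<not> d)"
    using q by (auto simp: sm_orient em_orient)
  have "mc e (pcs Q (alt Q d (x # xs))) =
        (if e \<and> d then 1 else 0) + mc (\<not> d) (pcs Q (alt Q (\<not> d) xs))"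
    using s1 e1 by (simp add: pcs_def)
  then show ?case using IH[of "\<not> d" "\<not> d"] by (cases d; cases e) auto
qed

lemma mc_As:
  "\<forall>x\<in>set xs. Q x \<noteq> [] \<and> sm (Q x) \<and> em (Q x) \<Longrightarrow>
   mc e (pcs Q (map (\<lambda>i. (i, False)) xs)) = (if xs = [] then 0 else of_bool e + length xs - 1)
   \<and> lastE e (pcs Q (map (\<lambda>i. (i, False)) xs)) = (if xs = [] then e else True)"
proof (induction xs arbitrary: e)
  case Nil then show ?case by (simp add: pcs_def lastE_def)
next
  case (Cons x xs)
  then show ?case by (cases xs) (auto simp: pcs_def lastE_def orient_def)
qed

lemma mc_Cs:
  "\<forall>x\<in>set xs. \<not> sm (Q x) \<Longrightarrow> mc e (pcs Q (map (\<lambda>i. (i, False)) xs)) = 0"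
  by (induction xs arbitrary: e) (auto simp: pcs_def orient_def)


lemma len_filter_upt: "length (filter P [0..<c]) = card {i. i < c \<and> P i}"
proof -
  have "set (filter P [0..<c]) = {i. i < c \<and> P i}" by auto
  then show ?thesis using distinct_card[OF distinct_filter[OF distinct_upt, of P 0 c]] by simp
qed

lemma arr_sum:
  fixes g :: "'a set list \<Rightarrow> nat"
  assumes "\<pi> permutes {0..<c}" "\<And>i fl. i < c \<Longrightarrow> g (orient fl (Q i)) = g (Q i)"
  shows "sum_list (map g (map (\<lambda>j. orient (f!j) (Q (\<pi> j))) [0..<c])) = (\<Sum>i<c. g (Q i))"
proof -
  have pc: "\<And>j. j < c \<Longrightarrow> \<pi> j < c"
    using permutes_in_image[OF assms(1)] by auto
  have "sum_list (map g (map (\<lambda>j. orient (f!j) (Q (\<pi> j))) [0..<c]))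
      = sum (\<lambda>j. g (orient (f!j) (Q (\<pi> j)))) {0..<c}"
    by (simp add: interv_sum_list_conv_sum_set_nat comp_def)
  also have "\<dots> = sum (\<lambda>j. g (Q (\<pi> j))) {0..<c}"
    using pc assms(2) by (intro sum.cong) auto
  also have "\<dots> = sum (\<lambda>i. g (Q i)) {0..<c}"
    using sum.permute[OF assms(1), of "\<lambda>i. g (Q i)"] by (simp add: comp_def)
  finally show ?thesis by (simp add: atLeast0LessThan)
qed

lemma witness_perm:
  assumes "distinct (map fst arr)" "set (map fst arr) = {0..<c}"
  shows "\<exists>\<pi> f. \<pi> permutes {0..<c} \<and> length f = c \<and>
           map (\<lambda>j. orient (f!j) (Q (\<pi> j))) [0..<c] = pcs Q arr"
proof -
  have len: "length arr = c"
    using distinct_card[OF assms(1)] assms(2) by simp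
  define \<pi> where "\<pi> = (\<lambda>j. if j < c then fst (arr!j) else j)"
  have b0: "bij_betw ((!) (map fst arr)) {..<length (map fst arr)} (set (map fst arr))"
    by (rule bij_betw_nth[OF assms(1)]) auto
  have "bij_betw \<pi> {0..<c} {0..<c}"
  proof -
    have "bij_betw ((!) (map fst arr)) {0..<c} {0..<c}"
      using b0 len assms(2) by (simp add: atLeast0LessThan)
    moreover have "\<And>j. j \<in> {0..<c} \<Longrightarrow> ((!) (map fst arr)) j = \<pi> j"
      using len by (simp add: \<pi>_def)
    ultimately show ?thesis using bij_betw_cong by blast
  qed
  then have p: "\<pi> permutes {0..<c}"
    by (rule bij_imp_permutes) (simp add: \<pi>_def)
  have "map (\<lambda>j. orient (map snd arr ! j) (Q (\<pi> j))) [0..<c] = pcs Q arr"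
    using len by (intro nth_equalityI) (auto simp: pcs_def \<pi>_def split: prod.splits)
  then show ?thesis using p len by (intro exI[of _ \<pi>] exI[of _ "map snd arr"]) simp
qed

lemma reach_in: "(\<lambda>u v. u \<in> V \<and> v \<in> V \<and> adj E u v)\<^sup>*\<^sup>* x y \<Longrightarrow> x \<in> V \<Longrightarrow> y \<in> V"
  by (induction rule: rtranclp.induct) auto


theorem mainTheorem20:
  fixes V :: "'a set" and E :: "'a set set" and c :: nat
    and Vs :: "nat \<Rightarrow> 'a set" and Q :: "nat \<Rightarrow> 'a set list"
  assumes G: "graph V E"
    and pw: "pathwidth V E = 3"
    and disj: "\<forall>i<c. \<forall>j<c. i \<noteq> j \<longrightarrow> Vs i \<inter> Vs j = {}"
    and cover: "(\<Union>i<c. Vs i) = V"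
    and comps: "\<forall>e\<in>E. \<exists>i<c. e \<subseteq> Vs i"
    and chunks: "\<forall>i<c. chunk_graph (Vs i) {e\<in>E. e \<subseteq> Vs i}"
    and pds: "\<forall>i<c. is_path_decomp (Vs i) {e\<in>E. e \<subseteq> Vs i} (Q i) \<and> pd_width (Q i) \<le> 3"
  shows "int (Min {length (concat_pds (map (\<lambda>j. orient (f ! j) (Q (\<pi> j))) [0..<c])) |
                   \<pi> f. \<pi> permutes {0..<c} \<and> length f = c})
         = (\<Sum>i<c. int (length (Q i)))
           - int (mu (card {i. i < c \<and> typeA (Q i)}) (card {i. i < c \<and> typeB (Q i)}))"
proof -
  define a where "a = card {i. i < c \<and> typeA (Q i)}"
  define b where "b = card {i. i < c \<and> typeB (Q i)}"
  define T where "T = (\<Sum>i<c. length (Q i))"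
  define S where "S = {length (concat_pds (map (\<lambda>j. orient (f ! j) (Q (\<pi> j))) [0..<c])) |
                   \<pi> f. \<pi> permutes {0..<c} \<and> length f = c}"
  have tA: "\<And>P. typeA P = (sm P \<and> em P)" by (simp add: typeA_def sm_def em_def)
  have tB: "\<And>P. typeB P = (sm P \<noteq> em P)" by (simp add: typeB_def sm_def em_def)
  have goodQ: "good (Q i)" if ic: "i < c" for i
  proof -
    let ?E = "{e\<in>E. e \<subseteq> Vs i}"
    obtain Sc where Sc: "big_component (Vs i) ?E Sc"
      using chunks ic unfolding chunk_graph_def by blast
    then obtain x where x: "x \<in> Vs i" "Sc = {y. reach (Vs i) ?E x y}" and c3: "card Sc \<ge> 3"
      unfolding big_component_def is_component_def by blast
    have sub: "Sc \<subseteq> Vs i" using x reach_in unfolding reach_def by fastforce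
    have fin: "finite (Vs i)"
      using G cover ic unfolding graph_def by (metis UN_upper finite_subset lessThan_iff)
    have cV: "card (Vs i) \<ge> 3" using card_mono[OF fin sub] c3 by simp
    have un: "\<Union>(set (Q i)) = Vs i" using pds ic unfolding is_path_decomp_def by blast
    have ne: "Q i \<noteq> []" using un cV by auto
    moreover have "\<not> sm (Q i)" if l1: "length (Q i) = 1"
    proof -
      obtain X where "Q i = [X]" using l1 by (cases "Q i") auto
      then show ?thesis using un cV by (simp add: sm_def)
    qed
    ultimately show ?thesis unfolding good_def by blast
  qed
  have neQ: "\<And>i. i < c \<Longrightarrow> Q i \<noteq> []" using goodQ good_def by blast
  have arr: "length (concat_pds Ps) + mc False Ps = T \<and> mc False Ps \<le> mu a b"
    if p: "\<pi> permutes {0..<c}" and Ps: "Ps = map (\<lambda>j. orient (f ! j) (Q (\<pi> j))) [0..<c]"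
    for \<pi> f Ps
  proof -
    have pc: "\<And>j. j < c \<Longrightarrow> \<pi> j < c"
      using permutes_in_image[OF p] by auto
    have gd: "\<forall>P\<in>set Ps. good P"
    proof
      fix P assume "P \<in> set Ps"
      then obtain j where j: "j < c" "P = orient (f ! j) (Q (\<pi> j))" using Ps by auto
      show "good P" unfolding j(2) by (rule good_orient[OF goodQ[OF pc[OF j(1)]]])
    qed
    have "sum_list (map length Ps) = T"
      unfolding Ps T_def by (rule arr_sum[OF p]) (simp add: len_orient)
    then have e1: "length (concat_pds Ps) + mc False Ps = T" using concat_len[OF gd] by simp
    define g1 where "g1 = (\<lambda>P::'a set list. of_bool (sm P) + of_bool (em P) :: nat)"
    have "sum_list (map g1 Ps) = (\<Sum>i<c. g1 (Q i))"
      unfolding Ps by (rule arr_sum[OF p]) (auto simp: g1_def sm_orient em_orient neQ)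
    also have "\<dots> = (\<Sum>i<c. 2 * of_bool (typeA (Q i)) + of_bool (typeB (Q i)))"
      by (intro sum.cong) (auto simp: g1_def tA tB)
    also have "\<dots> = 2 * a + b"
    proof -
      have "(\<Sum>i<c. of_bool (typeA (Q i)) :: nat) = a"
        unfolding a_def by (simp add: sum_of_bool_eq) (intro arg_cong[where f=card]; auto)
      moreover have "(\<Sum>i<c. of_bool (typeB (Q i)) :: nat) = b"
        unfolding b_def by (simp add: sum_of_bool_eq) (intro arg_cong[where f=card]; auto)
      ultimately show ?thesis by (simp add: sum.distrib sum_distrib_left[symmetric])
    qed
    finally have s1: "sum_list (map g1 Ps) = 2 * a + b" .
    have u1: "2 * mc False Ps \<le> 2 * a + b" using UB1[of False Ps] s1 by (simp add: g1_def)
    have "mc False Ps \<le> mu a b"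
    proof (cases "b = 0")
      case True
      then have nb: "\<And>i. i < c \<Longrightarrow> sm (Q i) = em (Q i)"
        unfolding b_def using tB by auto
      have all: "\<forall>P\<in>set Ps. sm P = em P"
        using Ps pc nb by (auto simp: sm_orient em_orient neQ)
      define g2 where "g2 = (\<lambda>P::'a set list. of_bool (sm P \<and> em P) :: nat)"
      have "sum_list (map g2 Ps) = (\<Sum>i<c. g2 (Q i))"
        unfolding Ps by (rule arr_sum[OF p]) (auto simp: g2_def sm_orient em_orient neQ)
      also have "\<dots> = a"
        unfolding a_def g2_def tA[symmetric] by (simp add: sum_of_bool_eq) (intro arg_cong[where f=card]; auto)
      finally have "sum_list (map g2 Ps) = a" .
      then show ?thesis using UB0[OF all, of False] True by (simp add: mu_def g2_def)
    next
      case False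
      then show ?thesis using u1 by (simp add: mu_def)
    qed
    then show ?thesis using e1 by simp
  qed
  define as where "as = filter (\<lambda>i. typeA (Q i)) [0..<c]"
  define bs where "bs = filter (\<lambda>i. typeB (Q i)) [0..<c]"
  define cs where "cs = filter (\<lambda>i. \<not> typeA (Q i) \<and> \<not> typeB (Q i)) [0..<c]"
  have la: "length as = a" unfolding as_def a_def by (rule len_filter_upt)
  have lb: "length bs = b" unfolding bs_def b_def by (rule len_filter_upt)
  have sA: "\<forall>x\<in>set as. Q x \<noteq> [] \<and> sm (Q x) \<and> em (Q x)" unfolding as_def using neQ tA by auto
  have sB: "\<forall>x\<in>set bs. Q x \<noteq> [] \<and> sm (Q x) \<noteq> em (Q x)" unfolding bs_def using neQ tB by auto
  have sC: "\<forall>x\<in>set cs. \<not> sm (Q x)" unfolding cs_def using tA tB by auto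
  have dd: "distinct as" "distinct bs" "distinct cs" unfolding as_def bs_def cs_def by auto
  have ss: "set as = {i. i < c \<and> typeA (Q i)}" "set bs = {i. i < c \<and> typeB (Q i)}"
    "set cs = {i. i < c \<and> \<not> typeA (Q i) \<and> \<not> typeB (Q i)}"
    unfolding as_def bs_def cs_def by auto
  have tAB: "\<And>P. typeA P \<Longrightarrow> \<not> typeB P" by (simp add: tA tB)
  let ?F = "\<lambda>xs. map (\<lambda>i. (i, False)) xs"
  have mfF: "\<And>xs. map fst (?F xs) = xs" by (simp add: comp_def)
  obtain arr where dA: "distinct (map fst arr)" and sAr: "set (map fst arr) = {0..<c}"
    and mA: "mc False (pcs Q arr) = mu a b"
  proof (cases "bs = []")
    case True
    then have b0: "b = 0" using lb by simp
    let ?arr = "?F as @ ?F cs"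
    have m: "map fst ?arr = as @ cs" by (simp only: map_append mfF)
    have i1: "set as \<inter> set cs = {}" unfolding ss by blast
    have "distinct (map fst ?arr)" unfolding m using dd i1 by simp
    moreover have "set (map fst ?arr) = {0..<c}"
    proof -
      have "{i. i < c \<and> typeB (Q i)} = {}" using ss(2) True by simp
      then show ?thesis unfolding m set_append ss by auto
    qed
    moreover have "mc False (pcs Q ?arr) = mu a b"
    proof -
      have "pcs Q ?arr = pcs Q (?F as) @ pcs Q (?F cs)" by (simp add: pcs_def)
      then have "mc False (pcs Q ?arr) = mc False (pcs Q (?F as))"
        using mc_Cs[OF sC] by (simp only: mc_app) 
      also have "\<dots> = a - 1" using mc_As[OF sA, of False] la by (cases "as = []") auto
      finally show ?thesis using b0 by (simp add: mu_def)
    qed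
    ultimately show ?thesis using that by blast
  next
    case False
    then obtain b0 rest where bs: "bs = b0 # rest" by (cases bs) auto
    let ?arr = "alt Q False [b0] @ ?F as @ alt Q True rest @ ?F cs"
    have m: "map fst ?arr = [b0] @ as @ rest @ cs" by (simp only: map_append mfF map_fst_alt)
    have i1: "set as \<inter> set cs = {}" "set as \<inter> set bs = {}" "set bs \<inter> set cs = {}"
      unfolding ss using tAB by blast+
    have "distinct (map fst ?arr)" unfolding m using dd i1 bs by auto
    moreover have "set (map fst ?arr) = {0..<c}"
    proof -
      have "set (map fst ?arr) = set as \<union> set bs \<union> set cs" unfolding m bs by auto
      also have "\<dots> = {0..<c}" unfolding ss by auto
      finally show ?thesis .
    qed
    moreover have "mc False (pcs Q ?arr) = mu a b"
    proof -
      have q0: "Q b0 \<noteq> []" "sm (Q b0) \<noteq> em (Q b0)" using sB bs by auto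
      have X1: "pcs Q (alt Q False [b0]) = [orient (sm (Q b0)) (Q b0)]" by (simp add: pcs_def)
      have m1: "mc False (pcs Q (alt Q False [b0])) = 0" by (simp add: pcs_def)
      have l1: "lastE False (pcs Q (alt Q False [b0])) = True"
        using q0 by (simp add: pcs_def lastE_def em_orient)
      have m2: "mc True (pcs Q (?F as)) = a" and l2: "lastE True (pcs Q (?F as)) = True"
        using mc_As[OF sA, of True] la by auto
      have sR: "\<forall>x\<in>set rest. Q x \<noteq> [] \<and> sm (Q x) \<noteq> em (Q x)" using sB bs by auto
      have m3: "mc True (pcs Q (alt Q True rest)) = b div 2"
        using mc_alt[OF sR, of True True] lb bs by simp
      have m4: "\<And>e. mc e (pcs Q (?F cs)) = 0" using mc_Cs[OF sC] by simp
      have "pcs Q ?arr = pcs Q (alt Q False [b0]) @ pcs Q (?F as) @ pcs Q (alt Q True rest) @ pcs Q (?F cs)"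
        by (simp add: pcs_def)
      then have "mc False (pcs Q ?arr) = a + b div 2"
        using m1 l1 m2 l2 m3 m4 by (simp only: mc_app)
      moreover have "b \<noteq> 0" using False lb by auto
      ultimately show ?thesis by (simp add: mu_def)
    qed
    ultimately show ?thesis using that by blast
  qed
  obtain \<pi>0 f0 where p0: "\<pi>0 permutes {0..<c}" "length f0 = c"
    and eq0: "map (\<lambda>j. orient (f0!j) (Q (\<pi>0 j))) [0..<c] = pcs Q arr"
    using witness_perm[OF dA sAr, of Q] by blast
  have w: "length (concat_pds (pcs Q arr)) + mu a b = T"
    using arr[OF p0(1) eq0[symmetric]] mA by simp
  have wS: "T - mu a b \<in> S" unfolding S_def using p0 eq0 w
    by (intro CollectI exI[of _ \<pi>0] exI[of _ f0]) auto
  have lb': "\<And>y. y \<in> S \<Longrightarrow> T - mu a b \<le> y \<and> y \<le> T"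
  proof -
    fix y assume "y \<in> S"
    then obtain \<pi> f where "\<pi> permutes {0..<c}" "y = length (concat_pds (map (\<lambda>j. orient (f ! j) (Q (\<pi> j))) [0..<c]))"
      unfolding S_def by blast
    then show "T - mu a b \<le> y \<and> y \<le> T" using arr[of \<pi> _ f] by fastforce
  qed
  have fS: "finite S" using lb' by (intro finite_subset[of S "{..T}"]) auto
  have "Min S = T - mu a b" using Min_eqI[OF fS] lb' wS by blast
  moreover have "mu a b \<le> T" using w by simp
  ultimately have "int (Min S) = int T - int (mu a b)" by simp
  then show ?thesis unfolding S_def T_def a_def b_def by simp
qed

end
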